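(* Let $F^r$ be the free group of rank $r$ and $s_*\colon F^r\to F^r$ an endomorphism whose image $\mathrm{Im}\,s_*$ is free of rank $r$. Let $s_*^{ab}\colon\mathbb Z^r\to\mathbb Z^r$ be the induced endomorphism of the abelianisation. Then: (1) $\lim^1(s_* )^n$ is trivial if and only if $s_*$ is an isomorphism; (2) if $s_*^{ab}$ is not an isomorphism, then $\lim^1(s_* )^n$ is not trivial.
   Context: $\lim^1(s_* )^n$ denotes $\lim^1$ of the inverse sequence $\cdots\to F^r\xrightarrow{s_*}F^r\xrightarrow{s_*}F^r$. For an inverse sequence of groups $\cdots\to A_1\xrightarrow{a_1}A_0$, $\lim^1$ is the pointed set of classes of $\prod_nA_n$ under $(x_n)\approx(y_n)$ iff $y_n=g_nx_na_{n+1}(g_{n+1}^{-1})$ for some $(g_n)$, based at the class of the identity; trivial means a single point. *)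

theory Defs
  imports "HOL-Algebra.Algebra"
begin

text \<open>Free group of rank r: reduced words over letters (b, i) with i < r;
  (False, i) is the generator x_i and (True, i) its inverse.\<close>

type_synonym letter = "bool \<times> nat"

definition inv_letter :: "letter \<Rightarrow> letter" where
  "inv_letter x = (\<not> fst x, snd x)"

fun reduced :: "letter list \<Rightarrow> bool" where
  "reduced [] = True"
| "reduced [x] = True"
| "reduced (x # y # ys) = (y \<noteq> inv_letter x \<and> reduced (y # ys))"

fun cons_red :: "letter \<Rightarrow> letter list \<Rightarrow> letter list" where
  "cons_red x [] = [x]"
| "cons_red x (y # ys) = (if y = inv_letter x then ys else x # y # ys)"

definition reduce :: "letter list \<Rightarrow> letter list" where
  "reduce w = foldr cons_red w []"

definition free_group :: "nat \<Rightarrow> letter list monoid" where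
  "free_group r = \<lparr> carrier = {w. reduced w \<and> (\<forall>x\<in>set w. snd x < r)},
                    monoid.mult = (\<lambda>u v. reduce (u @ v)),
                    one = [] \<rparr>"

text \<open>Abelianisation F^r \<rightarrow> Z^r (exponent sums), with Z^r = functions vanishing at indices \<ge> r.\<close>

definition Zr :: "nat \<Rightarrow> (nat \<Rightarrow> int) set" where
  "Zr r = {v. \<forall>i\<ge>r. v i = 0}"

definition ab :: "letter list \<Rightarrow> nat \<Rightarrow> int" where
  "ab w i = sum_list (map (\<lambda>x. if snd x = i then (if fst x then -1 else 1) else 0) w)"

text \<open>Induced endomorphism of the abelianisation: the unique homomorphism Z^r \<rightarrow> Z^r
  sending the basis vector e_j = ab(x_j) to ab(s(x_j)).\<close>

definition s_ab :: "nat \<Rightarrow> (letter list \<Rightarrow> letter list) \<Rightarrow> (nat \<Rightarrow> int) \<Rightarrow> nat \<Rightarrow> int" where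
  "s_ab r s v = (\<lambda>i. if i < r then (\<Sum>j<r. v j * ab (s [(False, j)]) i) else 0)"

text \<open>lim^1 of the inverse sequence ... \<rightarrow> G \<rightarrow>a G \<rightarrow>a G (constant group G, bonding map a).\<close>

definition lim1_rel :: "('g, 'm) monoid_scheme \<Rightarrow> ('g \<Rightarrow> 'g) \<Rightarrow> ((nat \<Rightarrow> 'g) \<times> (nat \<Rightarrow> 'g)) set" where
  "lim1_rel G a = {(x, y). (\<forall>n. x n \<in> carrier G) \<and> (\<forall>n. y n \<in> carrier G) \<and>
     (\<exists>g. (\<forall>n. g n \<in> carrier G) \<and>
          (\<forall>n. y n = g n \<otimes>\<^bsub>G\<^esub> x n \<otimes>\<^bsub>G\<^esub> a (inv\<^bsub>G\<^esub> (g (Suc n)))))}"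

definition lim1 :: "('g, 'm) monoid_scheme \<Rightarrow> ('g \<Rightarrow> 'g) \<Rightarrow> (nat \<Rightarrow> 'g) set set" where
  "lim1 G a = (UNIV \<rightarrow> carrier G) // lim1_rel G a"

definition lim1_trivial :: "('g, 'm) monoid_scheme \<Rightarrow> ('g \<Rightarrow> 'g) \<Rightarrow> bool" where
  "lim1_trivial G a \<longleftrightarrow> is_singleton (lim1 G a)"

end

theory Submission imports Defs "HOL-Library.Countable_Set" "HOL-Combinatorics.Permutations" begin
abbreviation R :: "letter list \<Rightarrow> letter list \<Rightarrow> letter list" where
  "R x z \<equiv> foldr cons_red x z"

lemma inv_inv_letter[simp]: "inv_letter (inv_letter l) = l"
  by (simp add: inv_letter_def)

lemma inv_letter_neq[simp]: "inv_letter l \<noteq> l"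
  by (cases l) (simp add: inv_letter_def)

lemma reduced_tl: "reduced (x # xs) \<Longrightarrow> reduced xs"
  by (cases xs) auto

lemma reduced_cons_red: "reduced v \<Longrightarrow> reduced (cons_red l v)"
  by (cases v) (auto dest: reduced_tl)

lemma set_cons_red: "set (cons_red l v) \<subseteq> insert l (set v)"
  by (cases v) auto

lemma reduced_R: "reduced z \<Longrightarrow> reduced (R x z)"
  by (induction x) (auto intro: reduced_cons_red)

lemma set_R: "set (R x z) \<subseteq> set x \<union> set z"
  by (induction x) (use set_cons_red in fastforce)+

lemma reduced_reduce: "reduced (reduce w)"
  unfolding reduce_def by (rule reduced_R) simp

lemma set_reduce: "set (reduce w) \<subseteq> set w"
  unfolding reduce_def using set_R[of w "[]"] by simp

lemma cons_red_cancel: "reduced t \<Longrightarrow> cons_red l (cons_red (inv_letter l) t) = t"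
proof (cases t)
  case Nil then show ?thesis by simp
next
  case (Cons h t')
  assume rt: "reduced t"
  show ?thesis
  proof (cases "h = l")
    case True
    then show ?thesis using Cons rt by (cases t') auto
  next
    case False
    then show ?thesis using Cons by auto
  qed
qed

lemma R_cons_red: "reduced z \<Longrightarrow> R (cons_red l v) z = cons_red l (R v z)"
proof (cases v)
  case Nil then show ?thesis by simp
next
  case (Cons h v')
  assume z: "reduced z"
  show ?thesis
  proof (cases "h = inv_letter l")
    case True
    then show ?thesis using Cons cons_red_cancel[OF reduced_R[OF z, of v']] by simp
  next
    case False
    then show ?thesis using Cons by simp
  qed
qed

lemma R_reduce: "reduced z \<Longrightarrow> R (reduce x) z = R x z"
  by (induction x) (auto simp: reduce_def R_cons_red)

lemma R_Nil_reduced: "reduced x \<Longrightarrow> R x [] = x"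
proof (induction x)
  case Nil then show ?case by simp
next
  case (Cons l x)
  then have "R x [] = x" using reduced_tl by blast
  then show ?case using Cons.prems by (cases x) auto
qed

lemma reduce_reduced: "reduced x \<Longrightarrow> reduce x = x"
  by (simp add: reduce_def R_Nil_reduced)

lemma reduce_append: "reduce (u @ v) = R u (reduce v)"
  by (simp add: reduce_def)

lemma R_inverse: "R (rev (map inv_letter x)) (x @ z) = z"
  by (induction x arbitrary: z) auto

lemma carrier_fg: "w \<in> carrier (free_group r) \<longleftrightarrow> reduced w \<and> (\<forall>x\<in>set w. snd x < r)"
  by (simp add: free_group_def)

lemma mult_fg: "u \<otimes>\<^bsub>free_group r\<^esub> v = reduce (u @ v)"
  by (simp add: free_group_def)

lemma one_fg: "\<one>\<^bsub>free_group r\<^esub> = []"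
  by (simp add: free_group_def)

lemma group_fg: "group (free_group r)"
proof (rule groupI)
  fix x y assume "x \<in> carrier (free_group r)" "y \<in> carrier (free_group r)"
  then show "x \<otimes>\<^bsub>free_group r\<^esub> y \<in> carrier (free_group r)"
    using set_reduce[of "x @ y"] by (auto simp: carrier_fg mult_fg reduced_reduce)
next
  show "\<one>\<^bsub>free_group r\<^esub> \<in> carrier (free_group r)" by (simp add: carrier_fg one_fg)
next
  fix x y z assume "x \<in> carrier (free_group r)" "y \<in> carrier (free_group r)" "z \<in> carrier (free_group r)"
  have "reduce (reduce (x @ y) @ z) = R (reduce (x @ y)) (reduce z)" by (simp add: reduce_append)
  also have "\<dots> = R (x @ y) (reduce z)" by (simp add: R_reduce reduced_reduce)
  also have "\<dots> = R x (reduce (y @ z))" by (simp add: reduce_append)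
  also have "\<dots> = R x (reduce (reduce (y @ z)))" by (simp add: reduce_reduced reduced_reduce)
  also have "\<dots> = reduce (x @ reduce (y @ z))" by (simp add: reduce_append)
  finally show "x \<otimes>\<^bsub>free_group r\<^esub> y \<otimes>\<^bsub>free_group r\<^esub> z = x \<otimes>\<^bsub>free_group r\<^esub> (y \<otimes>\<^bsub>free_group r\<^esub> z)"
    by (simp add: mult_fg)
next
  fix x assume "x \<in> carrier (free_group r)"
  then show "\<one>\<^bsub>free_group r\<^esub> \<otimes>\<^bsub>free_group r\<^esub> x = x"
    by (simp add: carrier_fg mult_fg one_fg reduce_reduced)
next
  fix x assume x: "x \<in> carrier (free_group r)"
  have rx: "reduce x = x" using x by (simp add: carrier_fg reduce_reduced)
  show "\<exists>y\<in>carrier (free_group r). y \<otimes>\<^bsub>free_group r\<^esub> x = \<one>\<^bsub>free_group r\<^esub>"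
  proof (intro bexI)
    show "reduce (rev (map inv_letter x)) \<otimes>\<^bsub>free_group r\<^esub> x = \<one>\<^bsub>free_group r\<^esub>"
      using R_inverse[of x "[]"] rx R_reduce[of x "rev (map inv_letter x)"] x
      by (simp add: mult_fg one_fg reduce_append carrier_fg)
    show "reduce (rev (map inv_letter x)) \<in> carrier (free_group r)"
      using x set_reduce[of "rev (map inv_letter x)"]
      by (fastforce simp: carrier_fg reduced_reduce inv_letter_def)
  qed
qed

lemma reduce_Cons: "reduce (l # u) = cons_red l (reduce u)"
  by (simp add: reduce_def)

lemma fg_r_one: "x \<in> carrier (free_group r) \<Longrightarrow> x \<otimes>\<^bsub>free_group r\<^esub> [] = x"
  by (simp add: mult_fg reduce_reduced carrier_fg)

lemma fg_l_one: "x \<in> carrier (free_group r) \<Longrightarrow> [] \<otimes>\<^bsub>free_group r\<^esub> x = x"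
  by (simp add: mult_fg reduce_reduced carrier_fg)

lemma fg_inv_one: "inv\<^bsub>free_group r\<^esub> [] = []"
  using monoid.inv_one[OF group.is_monoid[OF group_fg], of r] by (simp add: one_fg)

lemma fg_Nil_carrier: "[] \<in> carrier (free_group r)"
  by (simp add: carrier_fg)

definition lm :: "(nat \<Rightarrow> nat \<Rightarrow> nat) \<Rightarrow> letter \<Rightarrow> nat \<Rightarrow> nat" where
  "lm \<sigma> l = (if fst l then inv_into UNIV (\<sigma> (snd l)) else \<sigma> (snd l))"

definition ev :: "(nat \<Rightarrow> nat \<Rightarrow> nat) \<Rightarrow> letter list \<Rightarrow> nat \<Rightarrow> nat" where
  "ev \<sigma> w = foldr (\<lambda>l f. lm \<sigma> l \<circ> f) w id"

lemma ev_Nil[simp]: "ev \<sigma> [] = id"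
  by (simp add: ev_def)

lemma ev_Cons[simp]: "ev \<sigma> (l # w) = lm \<sigma> l \<circ> ev \<sigma> w"
  by (simp add: ev_def)

lemma ev_append: "ev \<sigma> (u @ v) = ev \<sigma> u \<circ> ev \<sigma> v"
  by (induction u) auto

lemma lm_cancel:
  assumes "\<And>i. bij (\<sigma> i)"
  shows "lm \<sigma> l \<circ> lm \<sigma> (inv_letter l) = id"
proof -
  have b: "bij (\<sigma> (snd l))" using assms by blast
  show ?thesis
  proof (cases "fst l")
    case True
    then have "lm \<sigma> l \<circ> lm \<sigma> (inv_letter l) = inv_into UNIV (\<sigma> (snd l)) \<circ> \<sigma> (snd l)"
      by (simp add: lm_def inv_letter_def)
    then show ?thesis using b bij_is_inj inv_o_cancel by metis
  next
    case False
    then have "lm \<sigma> l \<circ> lm \<sigma> (inv_letter l) = \<sigma> (snd l) \<circ> inv_into UNIV (\<sigma> (snd l))"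
      by (simp add: lm_def inv_letter_def)
    then show ?thesis using b bij_is_surj surj_iff by metis
  qed
qed

lemma ev_cons_red:
  assumes "\<And>i. bij (\<sigma> i)"
  shows "ev \<sigma> (cons_red l v) = lm \<sigma> l \<circ> ev \<sigma> v"
proof (cases v)
  case Nil then show ?thesis by simp
next
  case (Cons h v')
  show ?thesis
  proof (cases "h = inv_letter l")
    case True
    then show ?thesis using Cons lm_cancel[OF assms, where l=l]
      by (simp add: comp_assoc[symmetric])
  next
    case False then show ?thesis using Cons by simp
  qed
qed

lemma ev_R:
  assumes "\<And>i. bij (\<sigma> i)"
  shows "ev \<sigma> (R x z) = ev \<sigma> x \<circ> ev \<sigma> z"
  by (induction x) (auto simp: ev_cons_red[OF assms] comp_assoc)

lemma ev_reduce:
  assumes "\<And>i. bij (\<sigma> i)"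
  shows "ev \<sigma> (reduce x) = ev \<sigma> x"
  using ev_R[OF assms, where x=x and z="[]"] by (simp add: reduce_def)

lemma ev_mult:
  assumes "\<And>i. bij (\<sigma> i)"
  shows "ev \<sigma> (u \<otimes>\<^bsub>free_group r\<^esub> v) = ev \<sigma> u \<circ> ev \<sigma> v"
  by (simp add: mult_fg ev_reduce[OF assms] ev_append)

lemma ev_permutes:
  assumes "\<And>i. \<sigma> i permutes S"
  shows "ev \<sigma> w permutes S"
proof (induction w)
  case Nil then show ?case by (simp only: ev_Nil permutes_id)
next
  case (Cons l w)
  have "lm \<sigma> l permutes S" using assms[of "snd l"] by (auto simp: lm_def intro: permutes_inv)
  then show ?case using Cons unfolding ev_Cons by (rule permutes_compose[rotated])
qed

lemma ev_cong:
  assumes "\<forall>l\<in>set w. \<sigma> (snd l) = \<tau> (snd l)"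
  shows "ev \<sigma> w = ev \<tau> w"
  using assms by (induction w) (auto simp: lm_def)

definition PA :: "nat \<Rightarrow> nat \<Rightarrow> (nat \<Rightarrow> nat \<Rightarrow> nat) set" where
  "PA r n = {\<sigma>. (\<forall>i<r. \<sigma> i permutes {..n}) \<and> (\<forall>i\<ge>r. \<sigma> i = id)}"

lemma PA_permutes: "\<sigma> \<in> PA r n \<Longrightarrow> \<sigma> i permutes {..n}"
  unfolding PA_def by (cases "i < r") (auto simp: permutes_id)

lemma PA_bij: "\<sigma> \<in> PA r n \<Longrightarrow> bij (\<sigma> i)"
  using PA_permutes permutes_bij by blast

lemma finite_PA: "finite (PA r n)"
proof -
  let ?B = "PiE {..<r} (\<lambda>_. {p. p permutes {..n}})"
  have fB: "finite ?B" by (intro finite_PiE) (auto intro: finite_permutations)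
  have "(\<lambda>\<sigma>. restrict \<sigma> {..<r}) ` PA r n \<subseteq> ?B"
  proof
    fix x assume "x \<in> (\<lambda>\<sigma>. restrict \<sigma> {..<r}) ` PA r n"
    then obtain \<sigma> where "\<sigma> \<in> PA r n" "x = restrict \<sigma> {..<r}" by blast
    then show "x \<in> ?B" unfolding restrict_PiE_iff PA_def by simp
  qed
  then have "finite ((\<lambda>\<sigma>. restrict \<sigma> {..<r}) ` PA r n)" using fB finite_subset by blast
  moreover have "inj_on (\<lambda>\<sigma>. restrict \<sigma> {..<r}) (PA r n)"
  proof (rule inj_onI)
    fix \<sigma> \<tau> assume a: "\<sigma> \<in> PA r n" "\<tau> \<in> PA r n" "restrict \<sigma> {..<r} = restrict \<tau> {..<r}"
    show "\<sigma> = \<tau>"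
    proof
      fix i show "\<sigma> i = \<tau> i"
      proof (cases "i < r")
        case True then show ?thesis using fun_cong[OF a(3), of i] by simp
      next
        case False then show ?thesis using a(1,2) by (simp add: PA_def)
      qed
    qed
  qed
  ultimately show ?thesis using finite_imageD by blast
qed

lemma extend_perm:
  assumes "finite B" "A \<subseteq> B" "inj_on g A" "g ` A \<subseteq> B"
  shows "\<exists>p. p permutes B \<and> (\<forall>x\<in>A. p x = g x)"
proof -
  have fA: "finite A" using assms finite_subset by blast
  have "card (B - A) = card B - card A" using assms fA by (simp add: card_Diff_subset)
  moreover have "card (B - g ` A) = card B - card (g ` A)"
    using assms fA by (simp add: card_Diff_subset)
  moreover have "card (g ` A) = card A" using assms(3) by (rule card_image)
  ultimately have "card (B - A) = card (B - g ` A)" by simp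
  moreover have "finite (B - A)" "finite (B - g ` A)" using assms by auto
  ultimately obtain h where h: "bij_betw h (B - A) (B - g ` A)"
    by (meson finite_same_card_bij)
  have g: "bij_betw g A (g ` A)" using assms by (simp add: bij_betw_def)
  have "bij_betw (\<lambda>x. if x \<in> A then g x else h x) (A \<union> (B - A)) (g ` A \<union> (B - g ` A))"
    by (rule bij_betw_disjoint_Un[OF g h]) auto
  moreover have "A \<union> (B - A) = B" "g ` A \<union> (B - g ` A) = B" using assms by auto
  ultimately have bb: "bij_betw (\<lambda>x. if x \<in> A then g x else h x) B B" by simp
  define p where "p = (\<lambda>x. if x \<in> B then (if x \<in> A then g x else h x) else x)"
  have "bij_betw p B B" using bb unfolding p_def by (rule bij_betw_cong[THEN iffD1, rotated]) auto
  then have "p permutes B" by (rule bij_imp_permutes) (auto simp: p_def)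
  moreover have "\<forall>x\<in>A. p x = g x" using assms by (auto simp: p_def)
  ultimately show ?thesis by blast
qed

lemma reduced_nth: "reduced w \<Longrightarrow> Suc k < length w \<Longrightarrow> w ! Suc k \<noteq> inv_letter (w ! k)"
proof (induction w arbitrary: k)
  case Nil then show ?case by simp
next
  case (Cons x w)
  show ?case
  proof (cases w)
    case Nil then show ?thesis using Cons.prems by simp
  next
    case (Cons y ys)
    show ?thesis
    proof (cases k)
      case 0 then show ?thesis using Cons Cons.prems by simp
    next
      case (Suc k')
      have "reduced w" using Cons.prems reduced_tl[of x w] by simp
      then show ?thesis using Cons.IH[of k'] Cons.prems Suc by simp
    qed
  qed
qed

lemma residual:
  assumes "reduced w" "w \<noteq> []"
  shows "\<exists>\<sigma>. (\<forall>i. \<sigma> i permutes {..length w}) \<and> ev \<sigma> w (length w) = 0"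
proof -
  define n where "n = length w"
  define Pos where "Pos i = {Suc k | k. k < n \<and> w!k = (False,i)}" for i
  define Neg where "Neg i = {k. k < n \<and> w!k = (True,i)}" for i
  define g where "g i x = (if x \<in> Pos i then x - 1 else Suc x)" for i x
  have rn: "\<And>k. Suc k < n \<Longrightarrow> w!Suc k \<noteq> inv_letter (w!k)"
    using reduced_nth assms(1) n_def by blast
  have disj: "x \<notin> Neg i" if "x \<in> Pos i" for i x
  proof
    assume "x \<in> Neg i"
    from that obtain k where k: "x = Suc k" "k < n" "w!k = (False,i)" by (auto simp: Pos_def)
    from \<open>x \<in> Neg i\<close> k have "Suc k < n" "w!Suc k = (True,i)" by (auto simp: Neg_def)
    then show False using rn[of k] k by (simp add: inv_letter_def)
  qed
  have inj: "inj_on (g i) (Pos i \<union> Neg i)" for i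
  proof (rule inj_onI)
    fix x y assume xy: "x \<in> Pos i \<union> Neg i" "y \<in> Pos i \<union> Neg i" "g i x = g i y"
    have cross: False if "a \<in> Pos i" "b \<in> Neg i" "b \<notin> Pos i" "a - 1 = Suc b" for a b
    proof -
      from that obtain k where k: "a = Suc k" "k < n" "w!k = (False,i)" by (auto simp: Pos_def)
      with that have "k = Suc b" by simp
      moreover have "w!b = (True,i)" using that by (simp add: Neg_def)
      ultimately show False using rn[of b] k by (simp add: inv_letter_def)
    qed
    show "x = y"
    proof (cases "x \<in> Pos i"; cases "y \<in> Pos i")
      assume "x \<in> Pos i" "y \<in> Pos i"
      then show ?thesis using xy by (auto simp: g_def Pos_def)
    next
      assume "x \<in> Pos i" "y \<notin> Pos i"
      then show ?thesis using xy cross[of x y] by (simp add: g_def)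
    next
      assume "x \<notin> Pos i" "y \<in> Pos i"
      then show ?thesis using xy cross[of y x] by (simp add: g_def)
    next
      assume "x \<notin> Pos i" "y \<notin> Pos i"
      then show ?thesis using xy by (simp add: g_def)
    qed
  qed
  have sub: "Pos i \<union> Neg i \<subseteq> {..n}" for i by (auto simp: Pos_def Neg_def)
  have img: "g i ` (Pos i \<union> Neg i) \<subseteq> {..n}" for i
    by (auto simp: g_def Pos_def Neg_def)
  have "\<exists>p. p permutes {..n} \<and> (\<forall>x\<in>Pos i \<union> Neg i. p x = g i x)" for i
    by (rule extend_perm[OF _ sub inj img]) simp
  then obtain \<sigma> where \<sigma>: "\<And>i. \<sigma> i permutes {..n}" "\<And>i x. x \<in> Pos i \<union> Neg i \<Longrightarrow> \<sigma> i x = g i x"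
    by metis
  have stp: "lm \<sigma> (w!k) (Suc k) = k" if "k < n" for k
  proof -
    obtain b i where bi: "w!k = (b,i)" by fastforce
    show ?thesis
    proof (cases b)
      case False
      then have "Suc k \<in> Pos i" using bi that by (auto simp: Pos_def)
      then have "\<sigma> i (Suc k) = k" using \<sigma>(2)[where x="Suc k" and i=i] by (simp add: g_def)
      then show ?thesis using bi False by (simp add: lm_def)
    next
      case True
      then have "k \<in> Neg i" using bi that by (auto simp: Neg_def)
      then have "\<sigma> i k = Suc k" using \<sigma>(2)[where x=k and i=i] disj[where x=k and i=i] by (auto simp: g_def)
      moreover have "inj (\<sigma> i)" using \<sigma>(1) permutes_inj by blast
      ultimately have "inv_into UNIV (\<sigma> i) (Suc k) = k" by (simp add: inv_f_eq)
      then show ?thesis using bi True by (simp add: lm_def)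
    qed
  qed
  have "ev \<sigma> (drop k w) n = k" if "k \<le> n" for k
    using that
  proof (induction rule: inc_induct)
    case base then show ?case by (simp add: n_def)
  next
    case (step k)
    then have "drop k w = w!k # drop (Suc k) w" by (simp add: n_def Cons_nth_drop_Suc)
    then show ?case using step.IH step.hyps stp[of k] by simp
  qed
  from this[of 0] \<sigma>(1) show ?thesis unfolding n_def by auto
qed

definition Tm :: "nat \<Rightarrow> (letter list \<Rightarrow> letter list) \<Rightarrow> (nat \<Rightarrow> nat \<Rightarrow> nat) \<Rightarrow> nat \<Rightarrow> nat \<Rightarrow> nat" where
  "Tm r f \<sigma> = (\<lambda>i. if i < r then ev \<sigma> (f [(False, i)]) else id)"

lemma gen_carrier: "i < r \<Longrightarrow> [(b, i)] \<in> carrier (free_group r)"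
  by (simp add: carrier_fg)

lemma hom_Nil: "f \<in> hom (free_group r) (free_group r) \<Longrightarrow> f [] = []"
  using hom_one[of f "free_group r" "free_group r"] group_fg by (simp add: one_fg)

lemma Tm_PA:
  assumes "f \<in> hom (free_group r) (free_group r)" "\<sigma> \<in> PA r n"
  shows "Tm r f \<sigma> \<in> PA r n"
  using ev_permutes[OF PA_permutes[OF assms(2)]] by (auto simp: PA_def Tm_def)

lemma cons_eq_mult:
  assumes "l # u \<in> carrier (free_group r)"
  shows "l # u = [l] \<otimes>\<^bsub>free_group r\<^esub> u"
proof -
  have ru: "reduced u" using assms reduced_tl[of l u] by (auto simp: carrier_fg)
  have "[l] \<otimes>\<^bsub>free_group r\<^esub> u = cons_red l u"
    by (simp add: mult_fg reduce_Cons reduce_reduced[OF ru])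
  also have "\<dots> = l # u" using assms by (cases u) (auto simp: carrier_fg)
  finally show ?thesis by simp
qed

lemma ev_hom:
  assumes f: "f \<in> hom (free_group r) (free_group r)" and s: "\<sigma> \<in> PA r n"
    and u: "u \<in> carrier (free_group r)"
  shows "ev \<sigma> (f u) = ev (Tm r f \<sigma>) u"
  using u
proof (induction u)
  case Nil then show ?case using hom_Nil[OF f] by simp
next
  case (Cons l u)
  obtain b i where l: "l = (b, i)" by fastforce
  have ir: "i < r" using Cons.prems l by (auto simp: carrier_fg)
  have uc: "u \<in> carrier (free_group r)" using Cons.prems reduced_tl[of l u] by (auto simp: carrier_fg)
  have lc: "[l] \<in> carrier (free_group r)" using gen_carrier[OF ir] l by simp
  have bs: "\<And>i. bij (\<sigma> i)" using PA_bij[OF s] by blast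
  have fm: "\<And>x y. x \<in> carrier (free_group r) \<Longrightarrow> y \<in> carrier (free_group r) \<Longrightarrow>
      f (x \<otimes>\<^bsub>free_group r\<^esub> y) = f x \<otimes>\<^bsub>free_group r\<^esub> f y"
    using f by (simp add: hom_mult)
  have "f (l # u) = f [l] \<otimes>\<^bsub>free_group r\<^esub> f u"
    by (subst cons_eq_mult[OF Cons.prems]) (rule fm[OF lc uc])
  then have "ev \<sigma> (f (l # u)) = ev \<sigma> (f [l]) \<circ> ev \<sigma> (f u)"
    by (simp only: ev_mult[OF bs])
  also have "ev \<sigma> (f [l]) = lm (Tm r f \<sigma>) l"
  proof (cases b)
    case False then show ?thesis using l ir by (simp add: lm_def Tm_def)
  next
    case True
    have c1: "[(True,i)] \<otimes>\<^bsub>free_group r\<^esub> [(False,i)] = []"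
      by (simp add: mult_fg reduce_def inv_letter_def)
    have "ev \<sigma> (f [(True,i)]) \<circ> ev \<sigma> (f [(False,i)]) = ev \<sigma> (f ([(True,i)] \<otimes>\<^bsub>free_group r\<^esub> [(False,i)]))"
      by (simp only: fm[OF gen_carrier[OF ir] gen_carrier[OF ir]] ev_mult[OF bs])
    also have "\<dots> = id" using c1 hom_Nil[OF f] by simp
    finally have e: "ev \<sigma> (f [(True,i)]) \<circ> Tm r f \<sigma> i = id" using ir by (simp add: Tm_def)
    have "bij (Tm r f \<sigma> i)" using PA_bij[OF Tm_PA[OF f s]] by blast
    then have h: "Tm r f \<sigma> i \<circ> inv_into UNIV (Tm r f \<sigma> i) = id"
      using bij_is_surj surj_iff by blast
    have "ev \<sigma> (f [(True,i)]) = ev \<sigma> (f [(True,i)]) \<circ> (Tm r f \<sigma> i \<circ> inv_into UNIV (Tm r f \<sigma> i))"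
      using h by simp
    also have "\<dots> = (ev \<sigma> (f [(True,i)]) \<circ> Tm r f \<sigma> i) \<circ> inv_into UNIV (Tm r f \<sigma> i)"
      by (simp add: comp_assoc)
    also have "\<dots> = inv_into UNIV (Tm r f \<sigma> i)" using e by simp
    finally have "ev \<sigma> (f [(True,i)]) = inv_into UNIV (Tm r f \<sigma> i)" .
    then show ?thesis using l True by (simp add: lm_def)
  qed
  finally show ?case using Cons.IH[OF uc] by simp
qed

lemma hopfian:
  assumes f: "f \<in> hom (free_group r) (free_group r)"
    and surj: "f ` carrier (free_group r) = carrier (free_group r)"
  shows "inj_on f (carrier (free_group r))"
proof (rule ccontr)
  interpret G: group "free_group r" by (rule group_fg)
  interpret H: group_hom "free_group r" "free_group r" f
    by (simp add: group_hom_def group_hom_axioms_def group_fg f)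
  assume "\<not> inj_on f (carrier (free_group r))"
  then obtain u v where uv: "u \<in> carrier (free_group r)" "v \<in> carrier (free_group r)" "u \<noteq> v" "f u = f v"
    by (auto simp: inj_on_def)
  define w where "w = u \<otimes>\<^bsub>free_group r\<^esub> inv\<^bsub>free_group r\<^esub> v"
  have wc: "w \<in> carrier (free_group r)" using uv by (simp add: w_def)
  have wne: "w \<noteq> []"
  proof
    assume "w = []"
    then have "w \<otimes>\<^bsub>free_group r\<^esub> v = v" using uv by (simp add: mult_fg reduce_reduced carrier_fg)
    moreover have "w \<otimes>\<^bsub>free_group r\<^esub> v = u" using uv by (simp add: w_def G.m_assoc)
    ultimately show False using uv by simp
  qed
  have "f w = \<one>\<^bsub>free_group r\<^esub>" using uv by (simp add: w_def)
  then have fw: "f w = []" by (simp add: one_fg)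
  define n where "n = length w"
  obtain \<sigma> where \<sigma>: "\<And>i. \<sigma> i permutes {..n}" "ev \<sigma> w n = 0"
    using residual[OF _ wne] wc unfolding n_def carrier_fg by blast
  define \<sigma>0 where "\<sigma>0 = (\<lambda>i. if i < r then \<sigma> i else id)"
  have s0: "\<sigma>0 \<in> PA r n" using \<sigma>(1) by (simp add: PA_def \<sigma>0_def)
  have "ev \<sigma>0 w = ev \<sigma> w" by (rule ev_cong) (use wc in \<open>auto simp: carrier_fg \<sigma>0_def\<close>)
  moreover have "n > 0" using wne by (simp add: n_def)
  ultimately have ne: "ev \<sigma>0 w \<noteq> id"
  proof -
    assume e: "ev \<sigma>0 w = ev \<sigma> w" and n0: "n > 0"
    show ?thesis
    proof
      assume "ev \<sigma>0 w = id"
      then have "ev \<sigma> w = id" using e by simp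
      then have "ev \<sigma> w n = n" by simp
      then show False using \<sigma>(2) n0 by simp
    qed
  qed
  have injT: "inj_on (Tm r f) (PA r n)"
  proof (rule inj_onI)
    fix \<alpha> \<beta> assume ab: "\<alpha> \<in> PA r n" "\<beta> \<in> PA r n" "Tm r f \<alpha> = Tm r f \<beta>"
    have ev_eq: "ev \<alpha> x = ev \<beta> x" if "x \<in> carrier (free_group r)" for x
    proof -
      have "x \<in> f ` carrier (free_group r)" using that surj by simp
      then obtain y where y: "y \<in> carrier (free_group r)" "x = f y" by blast
      show ?thesis using ev_hom[OF f ab(1) y(1)] ev_hom[OF f ab(2) y(1)] ab(3) y(2) by simp
    qed
    show "\<alpha> = \<beta>"
    proof
      fix i show "\<alpha> i = \<beta> i"
      proof (cases "i < r")
        case True then show ?thesis using ev_eq[OF gen_carrier[OF True, of False]] by (simp add: lm_def)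
      next
        case False then show ?thesis using ab(1,2) by (simp add: PA_def)
      qed
    qed
  qed
  have "Tm r f ` PA r n = PA r n"
    by (rule endo_inj_surj[OF finite_PA _ injT]) (use Tm_PA[OF f] in blast)
  then have "\<sigma>0 \<in> Tm r f ` PA r n" using s0 by simp
  then obtain \<tau> where \<tau>: "\<tau> \<in> PA r n" "\<sigma>0 = Tm r f \<tau>" by blast
  have "ev \<sigma>0 w = ev \<tau> (f w)" using ev_hom[OF f \<tau>(1) wc] \<tau>(2) by simp
  also have "\<dots> = id" using fw by simp
  finally show False using ne by simp
qed

lemma triv_rel:
  assumes hom: "s \<in> hom (free_group r) (free_group r)"
    and tr: "lim1_trivial (free_group r) s"
    and y: "\<forall>n. y n \<in> carrier (free_group r)"
  shows "((\<lambda>_. []), y) \<in> lim1_rel (free_group r) s"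
proof -
  interpret G: group "free_group r" by (rule group_fg)
  let ?A = "UNIV \<rightarrow> carrier (free_group r)"
  let ?Rel = "lim1_rel (free_group r) s"
  have e: "(\<lambda>_. []) \<in> ?A" by (simp add: carrier_fg)
  have yA: "y \<in> ?A" using y by simp
  have refl: "(y, y) \<in> ?Rel"
    unfolding lim1_rel_def using y hom_Nil[OF hom]
    by (auto intro!: exI[of _ "\<lambda>_. []"] simp: fg_inv_one fg_l_one fg_r_one fg_Nil_carrier)
  have "?Rel `` {(\<lambda>_. [])} \<in> lim1 (free_group r) s" "?Rel `` {y} \<in> lim1 (free_group r) s"
    using e yA by (auto simp: lim1_def intro: quotientI)
  then have "?Rel `` {(\<lambda>_. [])} = ?Rel `` {y}"
    using tr by (auto simp: lim1_trivial_def is_singleton_def)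
  then show ?thesis using refl by blast
qed

lemma iso_triv:
  assumes iso: "s \<in> iso (free_group r) (free_group r)"
  shows "lim1_trivial (free_group r) s"
proof -
  interpret G: group "free_group r" by (rule group_fg)
  have hom: "s \<in> hom (free_group r) (free_group r)" using iso by (simp add: iso_def)
  interpret H: group_hom "free_group r" "free_group r" s
    by (simp add: group_hom_def group_hom_axioms_def group_fg hom)
  have bij: "bij_betw s (carrier (free_group r)) (carrier (free_group r))" using iso by (simp add: iso_def)
  let ?C = "carrier (free_group r)"
  let ?A = "UNIV \<rightarrow> ?C"
  let ?Rel = "lim1_rel (free_group r) s"
  define t where "t = inv_into ?C s"
  have tC: "x \<in> ?C \<Longrightarrow> t x \<in> ?C" for x
    using bij unfolding t_def by (metis bij_betw_def inv_into_into)
  have st: "x \<in> ?C \<Longrightarrow> s (t x) = x" for x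
    using bij unfolding t_def by (metis bij_betw_def f_inv_into_f)
  have all: "(y, z) \<in> ?Rel" if y: "y \<in> ?A" and z: "z \<in> ?A" for y z
  proof -
    have yC: "y n \<in> ?C" and zC: "z n \<in> ?C" for n using y z by auto
    define g where "g = rec_nat [] (\<lambda>n gn. t (inv\<^bsub>free_group r\<^esub> (z n) \<otimes>\<^bsub>free_group r\<^esub> gn \<otimes>\<^bsub>free_group r\<^esub> y n))"
    have g0: "g 0 = []" by (simp add: g_def)
    have gS: "g (Suc n) = t (inv\<^bsub>free_group r\<^esub> (z n) \<otimes>\<^bsub>free_group r\<^esub> g n \<otimes>\<^bsub>free_group r\<^esub> y n)" for n
      by (simp add: g_def)
    have gC: "g n \<in> ?C" for n
    proof (induction n)
      case 0 show ?case by (simp add: g0 fg_Nil_carrier)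
    next
      case (Suc n) show ?case unfolding gS by (rule tC) (use Suc yC zC in simp)
    qed
    have "z n = g n \<otimes>\<^bsub>free_group r\<^esub> y n \<otimes>\<^bsub>free_group r\<^esub> s (inv\<^bsub>free_group r\<^esub> (g (Suc n)))" for n
    proof -
      let ?q = "g n \<otimes>\<^bsub>free_group r\<^esub> y n"
      have qC: "?q \<in> ?C" using gC yC by simp
      have "s (g (Suc n)) = inv\<^bsub>free_group r\<^esub> (z n) \<otimes>\<^bsub>free_group r\<^esub> ?q"
        unfolding gS using gC yC zC by (simp add: st G.m_assoc)
      then have "s (inv\<^bsub>free_group r\<^esub> (g (Suc n))) = inv\<^bsub>free_group r\<^esub> ?q \<otimes>\<^bsub>free_group r\<^esub> z n"
        using gC qC zC by (simp add: G.inv_mult_group)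
      then show ?thesis using qC zC by (simp add: G.m_assoc[symmetric])
    qed
    then show ?thesis using yC zC gC unfolding lim1_rel_def by blast
  qed
  have sub: "?Rel \<subseteq> ?A \<times> ?A" by (auto simp: lim1_rel_def)
  have cls: "?Rel `` {y} = ?A" if "y \<in> ?A" for y
    using all[OF that] sub that by blast
  have e: "(\<lambda>_. []) \<in> ?A" by (simp add: carrier_fg)
  have "lim1 (free_group r) s = {?A}"
    unfolding lim1_def quotient_def using cls e by blast
  then show ?thesis by (simp add: lim1_trivial_def)
qed

lemma nat_set_uncountable: "\<not> countable (UNIV :: nat set set)"
proof
  assume "countable (UNIV :: nat set set)"
  then obtain h :: "nat set \<Rightarrow> nat" where "inj h" by (metis countableE)
  then have "surj (inv_into UNIV h)" by (rule inj_imp_surj_inv)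
  then have "inv_into UNIV h ` UNIV = Pow (UNIV :: nat set)" by simp
  then show False using Cantors_theorem by blast
qed

lemma nontriv:
  assumes hom: "s \<in> hom (free_group r) (free_group r)"
    and inj: "inj_on s (carrier (free_group r))"
    and a: "a \<in> carrier (free_group r)" "a \<notin> s ` carrier (free_group r)"
  shows "\<not> lim1_trivial (free_group r) s"
proof
  assume tr: "lim1_trivial (free_group r) s"
  interpret G: group "free_group r" by (rule group_fg)
  interpret H: group_hom "free_group r" "free_group r" s
    by (simp add: group_hom_def group_hom_axioms_def group_fg hom)
  let ?C = "carrier (free_group r)"
  define y where "y \<beta> n = (if n \<in> \<beta> then a else [])" for \<beta> :: "nat set" and n
  have yC: "y \<beta> n \<in> ?C" for \<beta> n using a by (simp add: y_def carrier_fg)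
  have "\<forall>\<beta>. \<exists>g. (\<forall>n. g n \<in> ?C) \<and> (\<forall>n. y \<beta> n = g n \<otimes>\<^bsub>free_group r\<^esub> [] \<otimes>\<^bsub>free_group r\<^esub> s (inv\<^bsub>free_group r\<^esub> (g (Suc n))))"
    using triv_rel[OF hom tr] yC unfolding lim1_rel_def by blast
  then obtain g where gC: "\<And>\<beta> n. g \<beta> n \<in> ?C"
    and gy: "\<And>\<beta> n. y \<beta> n = g \<beta> n \<otimes>\<^bsub>free_group r\<^esub> [] \<otimes>\<^bsub>free_group r\<^esub> s (inv\<^bsub>free_group r\<^esub> (g \<beta> (Suc n)))"
    by metis
  have rec: "g \<beta> n = y \<beta> n \<otimes>\<^bsub>free_group r\<^esub> s (g \<beta> (Suc n))" for \<beta> n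
  proof -
    have "y \<beta> n = g \<beta> n \<otimes>\<^bsub>free_group r\<^esub> inv\<^bsub>free_group r\<^esub> (s (g \<beta> (Suc n)))"
      using gy[of \<beta> n] gC by (simp add: fg_r_one)
    then show ?thesis using gC yC by (simp add: G.m_assoc)
  qed
  define S where "S k = s ^^ k" for k
  have SC: "x \<in> ?C \<Longrightarrow> S k x \<in> ?C" for k x by (induction k) (auto simp: S_def)
  have Smult: "x \<in> ?C \<Longrightarrow> z \<in> ?C \<Longrightarrow> S k (x \<otimes>\<^bsub>free_group r\<^esub> z) = S k x \<otimes>\<^bsub>free_group r\<^esub> S k z" for k x z
    by (induction k) (auto simp: S_def SC[unfolded S_def])
  have Sinj: "inj_on (S k) ?C" for k
  proof (induction k)
    case 0 then show ?case by (simp add: S_def)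
  next
    case (Suc k)
    have "S (Suc k) = s \<circ> S k" by (simp add: S_def)
    moreover have "S k ` ?C \<subseteq> ?C" using SC by blast
    ultimately show ?case using Suc inj comp_inj_on inj_on_subset by metis
  qed
  have SsS: "S k (s x) = S (Suc k) x" for k x by (simp add: S_def funpow_swap1)
  define P where "P \<beta> k = fold (\<lambda>j acc. acc \<otimes>\<^bsub>free_group r\<^esub> S j (y \<beta> j)) [0..<k] []" for \<beta> k
  have P0: "P \<beta> 0 = []" for \<beta> by (simp add: P_def)
  have PS: "P \<beta> (Suc k) = P \<beta> k \<otimes>\<^bsub>free_group r\<^esub> S k (y \<beta> k)" for \<beta> k by (simp add: P_def)
  have PC: "P \<beta> k \<in> ?C" for \<beta> k by (induction k) (simp_all add: P0 PS fg_Nil_carrier SC yC)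
  have g0: "g \<beta> 0 = P \<beta> k \<otimes>\<^bsub>free_group r\<^esub> S k (g \<beta> k)" for \<beta> k
  proof (induction k)
    case 0 then show ?case using gC by (simp add: P0 S_def fg_l_one)
  next
    case (Suc k)
    have "S k (g \<beta> k) = S k (y \<beta> k) \<otimes>\<^bsub>free_group r\<^esub> S (Suc k) (g \<beta> (Suc k))"
      using rec[of \<beta> k] Smult gC yC SsS by (metis H.hom_closed)
    then show ?case using Suc PC gC yC SC by (simp add: PS G.m_assoc)
  qed
  have Pagree: "P \<beta> k = P \<beta>' k" if "\<forall>j<k. (j \<in> \<beta>) = (j \<in> \<beta>')" for \<beta> \<beta>' k
    using that by (induction k) (auto simp: P0 PS y_def)
  have key: False if "a \<otimes>\<^bsub>free_group r\<^esub> s xx = s yy" "xx \<in> ?C" "yy \<in> ?C" for xx yy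
  proof -
    have "a = s yy \<otimes>\<^bsub>free_group r\<^esub> inv\<^bsub>free_group r\<^esub> (s xx)"
      using that a by (metis G.inv_solve_right H.hom_closed)
    also have "\<dots> = s (yy \<otimes>\<^bsub>free_group r\<^esub> inv\<^bsub>free_group r\<^esub> xx)" using that by simp
    finally have "a = s (yy \<otimes>\<^bsub>free_group r\<^esub> inv\<^bsub>free_group r\<^esub> xx)" .
    moreover have "yy \<otimes>\<^bsub>free_group r\<^esub> inv\<^bsub>free_group r\<^esub> xx \<in> ?C" using that by simp
    ultimately have "a \<in> s ` ?C" by (rule image_eqI)
    then show False using a by blast
  qed
  have "inj (\<lambda>\<beta>. g \<beta> 0)"
  proof (rule injI, rule ccontr)
    fix \<beta> \<beta>' assume eq: "g \<beta> 0 = g \<beta>' 0" and ne: "\<beta> \<noteq> \<beta>'"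
    then have "\<exists>j. (j \<in> \<beta>) \<noteq> (j \<in> \<beta>')" by blast
    define k where "k = (LEAST j. (j \<in> \<beta>) \<noteq> (j \<in> \<beta>'))"
    have kd: "(k \<in> \<beta>) \<noteq> (k \<in> \<beta>')" unfolding k_def using \<open>\<exists>j. _\<close> by (rule LeastI_ex)
    have "\<forall>j<k. (j \<in> \<beta>) = (j \<in> \<beta>')" unfolding k_def using not_less_Least by blast
    then have Pe: "P \<beta> k = P \<beta>' k" by (rule Pagree)
    have "P \<beta> k \<otimes>\<^bsub>free_group r\<^esub> S k (g \<beta> k) = P \<beta> k \<otimes>\<^bsub>free_group r\<^esub> S k (g \<beta>' k)"
      using eq g0[of \<beta> k] g0[of \<beta>' k] Pe by simp
    then have "S k (g \<beta> k) = S k (g \<beta>' k)" using PC SC gC by simp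
    then have "g \<beta> k = g \<beta>' k" using Sinj gC by (meson inj_onD)
    then have E: "y \<beta> k \<otimes>\<^bsub>free_group r\<^esub> s (g \<beta> (Suc k)) = y \<beta>' k \<otimes>\<^bsub>free_group r\<^esub> s (g \<beta>' (Suc k))"
      using rec by metis
    show False
    proof (cases "k \<in> \<beta>")
      case True
      then have "k \<notin> \<beta>'" using kd by blast
      then have "a \<otimes>\<^bsub>free_group r\<^esub> s (g \<beta> (Suc k)) = s (g \<beta>' (Suc k))"
        using E True gC by (simp add: y_def fg_l_one)
      then show False using key gC by blast
    next
      case False
      then have "k \<in> \<beta>'" using kd by blast
      then have "a \<otimes>\<^bsub>free_group r\<^esub> s (g \<beta>' (Suc k)) = s (g \<beta> (Suc k))"
        using E False gC by (simp add: y_def fg_l_one)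
      then show False using key gC by blast
    qed
  qed
  moreover have "countable ((\<lambda>\<beta>. g \<beta> 0) ` UNIV)" by simp
  ultimately have "countable (UNIV :: nat set set)" using countable_image_inj_on by blast
  then show False using nat_set_uncountable by blast
qed

definition sg :: "bool \<Rightarrow> int" where "sg b = (if b then -1 else 1)"

lemma ab_Nil[simp]: "ab [] i = 0" by (simp add: ab_def)

lemma ab_Cons: "ab (l # w) i = (if snd l = i then sg (fst l) else 0) + ab w i"
  by (simp add: ab_def sg_def)

lemma ab_append: "ab (u @ v) i = ab u i + ab v i"
  by (simp add: ab_def)

lemma ab_cons_red: "ab (cons_red l v) i = ab (l # v) i"
proof (cases v)
  case Nil then show ?thesis by simp
next
  case (Cons h v')
  then show ?thesis
    by (cases "h = inv_letter l") (auto simp: ab_Cons inv_letter_def sg_def)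
qed

lemma ab_R: "ab (R x z) i = ab x i + ab z i"
  by (induction x) (auto simp: ab_cons_red ab_Cons)

lemma ab_reduce: "ab (reduce x) i = ab x i"
  using ab_R[of x "[]" i] by (simp add: reduce_def)

lemma ab_mult: "ab (u \<otimes>\<^bsub>free_group r\<^esub> v) i = ab u i + ab v i"
  by (simp add: mult_fg ab_reduce ab_append)

lemma ab_zero: "w \<in> carrier (free_group r) \<Longrightarrow> r \<le> j \<Longrightarrow> ab w j = 0"
proof (induction w)
  case Nil then show ?case by simp
next
  case (Cons l w)
  then have "w \<in> carrier (free_group r)" using reduced_tl[of l w] by (simp add: carrier_fg)
  then show ?case using Cons by (auto simp: ab_Cons carrier_fg)
qed

lemma ab_Zr: "w \<in> carrier (free_group r) \<Longrightarrow> ab w \<in> Zr r"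
  using ab_zero by (auto simp: Zr_def)

lemma s_ab_add: "s_ab r f (\<lambda>i. v i + v' i) j = s_ab r f v j + s_ab r f v' j"
  by (simp add: s_ab_def algebra_simps sum.distrib)

lemma s_ab_gen:
  assumes "i < r"
  shows "s_ab r f (ab [(b, i)]) j = (if j < r then sg b * ab (f [(False, i)]) j else 0)"
proof -
  have "(\<Sum>k<r. ab [(b, i)] k * ab (f [(False, k)]) j) = (\<Sum>k<r. if k = i then sg b * ab (f [(False, k)]) j else 0)"
    by (rule sum.cong) (auto simp: ab_Cons)
  also have "\<dots> = sg b * ab (f [(False, i)]) j" using assms by (simp add: sum.delta)
  finally show ?thesis by (simp add: s_ab_def)
qed

lemma ab_hom:
  assumes f: "f \<in> hom (free_group r) (free_group r)"
    and u: "u \<in> carrier (free_group r)"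
  shows "ab (f u) j = s_ab r f (ab u) j"
  using u
proof (induction u arbitrary: j)
  case Nil then show ?case using hom_Nil[OF f] by (simp add: s_ab_def)
next
  case (Cons l u)
  obtain b i where l: "l = (b, i)" by fastforce
  have ir: "i < r" using Cons.prems l by (auto simp: carrier_fg)
  have uc: "u \<in> carrier (free_group r)" using Cons.prems reduced_tl[of l u] by (auto simp: carrier_fg)
  have lc: "[l] \<in> carrier (free_group r)" using gen_carrier[OF ir] l by simp
  have fm: "\<And>x y. x \<in> carrier (free_group r) \<Longrightarrow> y \<in> carrier (free_group r) \<Longrightarrow>
      f (x \<otimes>\<^bsub>free_group r\<^esub> y) = f x \<otimes>\<^bsub>free_group r\<^esub> f y"
    using f by (simp add: hom_mult)
  have fC: "\<And>x. x \<in> carrier (free_group r) \<Longrightarrow> f x \<in> carrier (free_group r)"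
    using f by (auto simp: hom_def)
  have "f (l # u) = f [l] \<otimes>\<^bsub>free_group r\<^esub> f u"
    by (subst cons_eq_mult[OF Cons.prems]) (rule fm[OF lc uc])
  then have e1: "ab (f (l # u)) j = ab (f [l]) j + ab (f u) j" by (simp add: ab_mult)
  have e2: "ab (l # u) = (\<lambda>k. ab [l] k + ab u k)" by (rule ext) (simp add: ab_Cons)
  have gl: "ab (f [l]) j = s_ab r f (ab [l]) j"
  proof (cases "j < r")
    case False
    then show ?thesis using ab_zero[OF fC[OF lc]] by (simp add: s_ab_def)
  next
    case jr: True
    show ?thesis
    proof (cases b)
      case False then show ?thesis using l ir jr by (simp add: s_ab_gen sg_def)
    next
      case True
      have c1: "[(True,i)] \<otimes>\<^bsub>free_group r\<^esub> [(False,i)] = []"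
        by (simp add: mult_fg reduce_def inv_letter_def)
      have "ab (f [(True,i)]) j + ab (f [(False,i)]) j = ab (f ([(True,i)] \<otimes>\<^bsub>free_group r\<^esub> [(False,i)])) j"
        by (simp only: fm[OF gen_carrier[OF ir] gen_carrier[OF ir]] ab_mult)
      also have "\<dots> = 0" using c1 hom_Nil[OF f] by simp
      finally show ?thesis using l ir jr True by (simp add: s_ab_gen sg_def)
    qed
  qed
  show ?case using e1 e2 gl Cons.IH[OF uc, of j] by (simp add: s_ab_add)
qed

lemma sum_list_upt_delta:
  "sum_list (map (\<lambda>k. if k = i then c k else (0::int)) [0..<r]) = (if i < r then c i else 0)"
proof -
  have "sum_list (map (\<lambda>k. if k = i then c k else (0::int)) [0..<r]) = (\<Sum>k\<in>{0..<r}. if k = i then c k else 0)"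
    by (simp add: sum_set_upt_conv_sum_list_nat[symmetric])
  also have "\<dots> = (if i < r then c i else 0)" by (simp add: sum.delta)
  finally show ?thesis .
qed

lemma ab_replicate: "ab (replicate m (b, k)) i = (if k = i then int m * sg b else 0)"
  by (induction m) (auto simp: ab_Cons algebra_simps)

lemma ab_concat: "ab (concat xs) i = sum_list (map (\<lambda>x. ab x i) xs)"
  by (induction xs) (auto simp: ab_append)

lemma ab_surj:
  assumes v: "v \<in> Zr r"
  shows "\<exists>w \<in> carrier (free_group r). ab w = v"
proof -
  define W where "W = concat (map (\<lambda>k. replicate (nat \<bar>v k\<bar>) (v k < 0, k)) [0..<r])"
  have abW: "ab W i = v i" for i
  proof -
    have "ab W i = sum_list (map (\<lambda>k. if k = i then int (nat \<bar>v k\<bar>) * sg (v k < 0) else 0) [0..<r])"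
      by (simp add: W_def ab_concat ab_replicate comp_def)
    also have "\<dots> = (if i < r then int (nat \<bar>v i\<bar>) * sg (v i < 0) else 0)"
      by (rule sum_list_upt_delta)
    also have "\<dots> = v i" using v by (auto simp: Zr_def sg_def)
    finally show ?thesis .
  qed
  have "set W \<subseteq> {l. snd l < r}" by (auto simp: W_def)
  then have "reduce W \<in> carrier (free_group r)"
    using set_reduce[of W] by (auto simp: carrier_fg reduced_reduce)
  moreover have "ab (reduce W) = v" by (rule ext) (simp add: ab_reduce abW)
  ultimately show ?thesis by blast
qed

lemma iso_s_ab_bij:
  assumes iso: "s \<in> iso (free_group r) (free_group r)"
  shows "bij_betw (s_ab r s) (Zr r) (Zr r)"
proof -
  interpret G: group "free_group r" by (rule group_fg)
  let ?C = "carrier (free_group r)"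
  define t where "t = inv_into ?C s"
  have tiso: "t \<in> iso (free_group r) (free_group r)" unfolding t_def by (rule G.iso_set_sym[OF iso])
  have hs: "s \<in> hom (free_group r) (free_group r)" using iso by (simp add: iso_def)
  have ht: "t \<in> hom (free_group r) (free_group r)" using tiso by (simp add: iso_def)
  have bij: "bij_betw s ?C ?C" using iso by (simp add: iso_def)
  have tC: "x \<in> ?C \<Longrightarrow> t x \<in> ?C" for x
    using bij unfolding t_def by (metis bij_betw_def inv_into_into)
  have st: "x \<in> ?C \<Longrightarrow> s (t x) = x" for x
    using bij unfolding t_def by (metis bij_betw_def f_inv_into_f)
  have ts: "x \<in> ?C \<Longrightarrow> t (s x) = x" for x
    using bij unfolding t_def by (metis bij_betw_def inv_into_f_f)
  have sC: "x \<in> ?C \<Longrightarrow> s x \<in> ?C" for x using hs by (auto simp: hom_def)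
  have abs: "x \<in> ?C \<Longrightarrow> ab (s x) = s_ab r s (ab x)" for x
    by (rule ext) (rule ab_hom[OF hs])
  have abt: "x \<in> ?C \<Longrightarrow> ab (t x) = s_ab r t (ab x)" for x
    by (rule ext) (rule ab_hom[OF ht])
  have inj: "inj_on (s_ab r s) (Zr r)"
  proof (rule inj_onI)
    fix v v' assume vv: "v \<in> Zr r" "v' \<in> Zr r" "s_ab r s v = s_ab r s v'"
    obtain w where w: "w \<in> ?C" "ab w = v" using ab_surj[OF vv(1)] by blast
    obtain w' where w': "w' \<in> ?C" "ab w' = v'" using ab_surj[OF vv(2)] by blast
    have "v = ab (t (s w))" using w ts by simp
    also have "\<dots> = s_ab r t (s_ab r s v)" using abt[OF sC[OF w(1)]] abs[OF w(1)] w(2) by simp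
    also have "\<dots> = s_ab r t (s_ab r s v')" using vv(3) by simp
    also have "\<dots> = ab (t (s w'))" using abt[OF sC[OF w'(1)]] abs[OF w'(1)] w'(2) by simp
    also have "\<dots> = v'" using w' ts by simp
    finally show "v = v'" .
  qed
  have "s_ab r s ` Zr r = Zr r"
  proof
    show "s_ab r s ` Zr r \<subseteq> Zr r" by (auto simp: s_ab_def Zr_def)
  next
    show "Zr r \<subseteq> s_ab r s ` Zr r"
    proof
      fix v assume v: "v \<in> Zr r"
      obtain w where w: "w \<in> ?C" "ab w = v" using ab_surj[OF v] by blast
      have "v = ab (s (t w))" using w st by simp
      also have "\<dots> = s_ab r s (ab (t w))" using abs[OF tC[OF w(1)]] .
      finally show "v \<in> s_ab r s ` Zr r" using ab_Zr[OF tC[OF w(1)]] by blast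
    qed
  qed
  then show ?thesis using inj by (simp add: bij_betw_def)
qed

lemma s_inj:
  assumes hom: "s \<in> hom (free_group r) (free_group r)"
    and im_free: "(free_group r)\<lparr>carrier := s ` carrier (free_group r)\<rparr> \<cong> free_group r"
  shows "inj_on s (carrier (free_group r))"
proof -
  let ?C = "carrier (free_group r)"
  let ?H = "(free_group r)\<lparr>carrier := s ` ?C\<rparr>"
  obtain h where h: "h \<in> iso ?H (free_group r)" using im_free by (auto simp: is_iso_def)
  have hh: "h \<in> hom ?H (free_group r)" and hb: "bij_betw h (s ` ?C) ?C"
    using h by (auto simp: iso_def)
  have sC: "x \<in> ?C \<Longrightarrow> s x \<in> ?C" for x using hom by (auto simp: hom_def)
  have hm: "x \<in> s ` ?C \<Longrightarrow> y \<in> s ` ?C \<Longrightarrow> h (x \<otimes>\<^bsub>free_group r\<^esub> y) = h x \<otimes>\<^bsub>free_group r\<^esub> h y" for x y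
    using hh by (auto simp: hom_def)
  have hC: "x \<in> s ` ?C \<Longrightarrow> h x \<in> ?C" for x using hb by (auto simp: bij_betw_def)
  have fh: "(h \<circ> s) \<in> hom (free_group r) (free_group r)"
  proof (rule homI)
    fix x assume "x \<in> ?C" then show "(h \<circ> s) x \<in> ?C" using hC by simp
  next
    fix x y assume xy: "x \<in> ?C" "y \<in> ?C"
    have "s (x \<otimes>\<^bsub>free_group r\<^esub> y) = s x \<otimes>\<^bsub>free_group r\<^esub> s y" using hom xy by (simp add: hom_mult)
    then show "(h \<circ> s) (x \<otimes>\<^bsub>free_group r\<^esub> y) = (h \<circ> s) x \<otimes>\<^bsub>free_group r\<^esub> (h \<circ> s) y"
      using hm xy by simp
  qed
  have "(h \<circ> s) ` ?C = h ` (s ` ?C)" by (rule image_comp[symmetric])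
  then have "(h \<circ> s) ` ?C = ?C" using hb by (simp add: bij_betw_def)
  then have "inj_on (h \<circ> s) ?C" using hopfian[OF fh] by blast
  then show ?thesis by (rule inj_on_imageI2)
qed

theorem proposition4p6:
  fixes r :: nat and s :: "letter list \<Rightarrow> letter list"
  assumes hom: "s \<in> hom (free_group r) (free_group r)"
    and im_free: "(free_group r)\<lparr>carrier := s ` carrier (free_group r)\<rparr> \<cong> free_group r"
  shows "(lim1_trivial (free_group r) s \<longleftrightarrow> s \<in> iso (free_group r) (free_group r))
       \<and> (\<not> bij_betw (s_ab r s) (Zr r) (Zr r) \<longrightarrow> \<not> lim1_trivial (free_group r) s)"
proof -
  let ?C = "carrier (free_group r)"
  have inj: "inj_on s ?C" by (rule s_inj[OF hom im_free])
  have sub: "s ` ?C \<subseteq> ?C" using hom by (auto simp: hom_def)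
  have p1: "lim1_trivial (free_group r) s \<longleftrightarrow> s \<in> iso (free_group r) (free_group r)"
  proof
    assume tr: "lim1_trivial (free_group r) s"
    have "s ` ?C = ?C"
    proof (rule ccontr)
      assume "s ` ?C \<noteq> ?C"
      then obtain a where "a \<in> ?C" "a \<notin> s ` ?C" using sub by blast
      then show False using nontriv[OF hom inj] tr by blast
    qed
    then show "s \<in> iso (free_group r) (free_group r)"
      using inj hom by (auto simp: iso_def bij_betw_def)
  next
    assume "s \<in> iso (free_group r) (free_group r)"
    then show "lim1_trivial (free_group r) s" by (rule iso_triv)
  qed
  moreover have "\<not> bij_betw (s_ab r s) (Zr r) (Zr r) \<longrightarrow> \<not> lim1_trivial (free_group r) s"
    using p1 iso_s_ab_bij by blast
  ultimately show ?thesis by blast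
qed

end
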